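(* Let $b\ge 1$ and, for $i\in[b]=\{1,\dots,b\}$, let $\mathcal X_i=\mathbb R^{m_i\times n_i}$ be equipped with the trace inner product $\langle X_i,Y_i\rangle_{(i)}=\operatorname{tr}(X_i^\top Y_i)$ and an arbitrary norm $\|\cdot\|_{(i)}$ with dual norm $\|Y_i\|_{(i)\star}=\sup_{\|Z_i\|_{(i)}\le 1}\langle Y_i,Z_i\rangle_{(i)}$. Let $\mathcal X=\mathcal X_1\times\cdots\times\mathcal X_b$ with elements $X=[X_1,\dots,X_b]$ and inner product $\langle X,Y\rangle=\sum_i\langle X_i,Y_i\rangle_{(i)}$. Let $f:\mathcal X\to\mathbb R$ be continuously differentiable, with $i$-th gradient block $\nabla_i f(X)\in\mathcal X_i$, and assume there is $f^\star\in\mathbb R$ with $f(X)\ge f^\star$ for all $X\in\mathcal X$. Let $p_1,\dots,p_b\ge 0$ with $\sum_{i=1}^b p_i=1$ and $p_1>0$, and let $\mathcal D$ be the distribution of the random set $\{s,\dots,b\}$ where $s\in[b]$ is drawn with $\Pr(s=i)=p_i$ (randomized progressive training). Assume $f$ is $\operatorname{supp}(\mathcal D)$-layer-wise $L^0$-smooth: there are constants $L^0_{i,S}\ge 0$ ($i\in[b]$, $S\in\operatorname{supp}(\mathcal D)$), with $L^0_{i,S}=0$ for $i\notin S$, such that for every $S\in\operatorname{supp}(\mathcal D)$, all $X\in\mathcal X$ and all $\Gamma=[\Gamma_1,\dots,\Gamma_b]\in\mathcal X$ with $\Gamma_i=0$ for $i\notin S$, $$f(X+\Gamma)-f(X)-\langle\nabla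 f(X),\Gamma\rangle\le\sum_{i\in S}\frac{L^0_{i,S}}{2}\|\Gamma_i\|_{(i)}^2 .$$ Consider the iterates $\{X^k\}$ generated from $X^0\in\mathcal X$ as follows: for $k=0,1,\dots$, draw $S^k\sim\mathcal D$ independently of the past, set $X_i^{k+1}=X_i^k-\gamma_i^k(\nabla_i f(X^k))^\sharp$ for $i\in S^k$ and $X_i^{k+1}=X_i^k$ for $i\notin S^k$, with stepsizes $\gamma_i^k=1/L^0_{i,S^k}$. Then for every $K\ge 1$, $$\frac1K\sum_{k=0}^{K-1}\sum_{i=1}^b\frac{w_i}{\frac1b\sum_{j=1}^b w_j}\,\mathbb E\big[\|\nabla_i f(X^k)\|_{(i)\star}^2\big]\le\frac{f(X^0)-f^\star}{K\left(\frac1b\sum_{j=1}^b w_j\right)},\qquad w_i:=\sum_{s=1}^i\frac{p_s}{2L^0_{i,\{s,\dots,b\}}}.$$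
   Context: For $G\in\mathcal X_i$, $G^\sharp$ (the sharp operator) denotes an element of $\arg\max_{Z\in\mathcal X_i}\{\langle G,Z\rangle_{(i)}-\tfrac12\|Z\|_{(i)}^2\}$. $\operatorname{supp}(\mathcal D)$ is the collection of subsets of $[b]$ having positive probability under $\mathcal D$; here it is $\{\{j,\dots,b\}:p_j>0\}$. Expectations are over the random sets $S^k$. *)

theory Defs
  imports Complex_Main
begin

text \<open>A block X_i in R^(m_i x n_i) is represented as a function nat => nat => real
  that vanishes outside the index range {..<m i} x {..<n i}.
  A point X = [X_1,...,X_b] of the product space is a function from block indices
  (1..b) to blocks, equal to the zero matrix outside 1..b.\<close>

type_synonym mat = "nat \<Rightarrow> nat \<Rightarrow> real"
type_synonym bvec = "nat \<Rightarrow> mat"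

definition zmat :: mat where "zmat = (\<lambda>r c. 0)"

definition blk :: "(nat \<Rightarrow> nat) \<Rightarrow> (nat \<Rightarrow> nat) \<Rightarrow> nat \<Rightarrow> mat set" where
  "blk m n i = {M. \<forall>r c. (m i \<le> r \<or> n i \<le> c) \<longrightarrow> M r c = 0}"

definition inner_blk :: "(nat \<Rightarrow> nat) \<Rightarrow> (nat \<Rightarrow> nat) \<Rightarrow> nat \<Rightarrow> mat \<Rightarrow> mat \<Rightarrow> real" where
  "inner_blk m n i M N = (\<Sum>r<m i. \<Sum>c<n i. M r c * N r c)"

definition madd :: "mat \<Rightarrow> mat \<Rightarrow> mat" where "madd M N = (\<lambda>r c. M r c + N r c)"
definition msub :: "mat \<Rightarrow> mat \<Rightarrow> mat" where "msub M N = (\<lambda>r c. M r c - N r c)"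
definition mscale :: "real \<Rightarrow> mat \<Rightarrow> mat" where "mscale a M = (\<lambda>r c. a * M r c)"

definition bspace :: "nat \<Rightarrow> (nat \<Rightarrow> nat) \<Rightarrow> (nat \<Rightarrow> nat) \<Rightarrow> bvec set" where
  "bspace b m n = {X. \<forall>i. (i \<in> {1..b} \<longrightarrow> X i \<in> blk m n i) \<and> (i \<notin> {1..b} \<longrightarrow> X i = zmat)}"

definition badd :: "bvec \<Rightarrow> bvec \<Rightarrow> bvec" where "badd X Y = (\<lambda>i. madd (X i) (Y i))"
definition bsub :: "bvec \<Rightarrow> bvec \<Rightarrow> bvec" where "bsub X Y = (\<lambda>i. msub (X i) (Y i))"

definition binner :: "nat \<Rightarrow> (nat \<Rightarrow> nat) \<Rightarrow> (nat \<Rightarrow> nat) \<Rightarrow> bvec \<Rightarrow> bvec \<Rightarrow> real" where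
  "binner b m n X Y = (\<Sum>i=1..b. inner_blk m n i (X i) (Y i))"

definition beuc :: "nat \<Rightarrow> (nat \<Rightarrow> nat) \<Rightarrow> (nat \<Rightarrow> nat) \<Rightarrow> bvec \<Rightarrow> real" where
  "beuc b m n X = sqrt (binner b m n X X)"

definition is_norm_on_blk :: "(nat \<Rightarrow> nat) \<Rightarrow> (nat \<Rightarrow> nat) \<Rightarrow> nat \<Rightarrow> (mat \<Rightarrow> real) \<Rightarrow> bool" where
  "is_norm_on_blk m n i N \<longleftrightarrow>
     (\<forall>Z\<in>blk m n i. 0 \<le> N Z \<and> (N Z = 0 \<longleftrightarrow> Z = zmat)) \<and>
     (\<forall>Z\<in>blk m n i. \<forall>a. N (mscale a Z) = \<bar>a\<bar> * N Z) \<and>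
     (\<forall>Z\<in>blk m n i. \<forall>W\<in>blk m n i. N (madd Z W) \<le> N Z + N W)"

definition dual_norm :: "(nat \<Rightarrow> nat) \<Rightarrow> (nat \<Rightarrow> nat) \<Rightarrow> nat \<Rightarrow> (mat \<Rightarrow> real) \<Rightarrow> mat \<Rightarrow> real" where
  "dual_norm m n i N Y = Sup {inner_blk m n i Y Z | Z. Z \<in> blk m n i \<and> N Z \<le> 1}"

text \<open>f is continuously differentiable on the product space with gradient grad
  (Frechet differentiability w.r.t. the Euclidean (trace) norm, all norms being
  equivalent in finite dimension; gradient continuous).\<close>
definition cont_diff_grad :: "nat \<Rightarrow> (nat \<Rightarrow> nat) \<Rightarrow> (nat \<Rightarrow> nat) \<Rightarrow> (bvec \<Rightarrow> real) \<Rightarrow> (bvec \<Rightarrow> bvec) \<Rightarrow> bool" where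
  "cont_diff_grad b m n f grad \<longleftrightarrow>
     (\<forall>X\<in>bspace b m n. grad X \<in> bspace b m n) \<and>
     (\<forall>X\<in>bspace b m n. \<forall>e>0. \<exists>d>0. \<forall>H\<in>bspace b m n. beuc b m n H < d \<longrightarrow>
         \<bar>f (badd X H) - f X - binner b m n (grad X) H\<bar> \<le> e * beuc b m n H) \<and>
     (\<forall>X\<in>bspace b m n. \<forall>e>0. \<exists>d>0. \<forall>Y\<in>bspace b m n. beuc b m n (bsub Y X) < d \<longrightarrow>
         beuc b m n (bsub (grad Y) (grad X)) < e)"

definition is_sharp :: "(nat \<Rightarrow> nat) \<Rightarrow> (nat \<Rightarrow> nat) \<Rightarrow> nat \<Rightarrow> (mat \<Rightarrow> real) \<Rightarrow> mat \<Rightarrow> mat \<Rightarrow> bool" where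
  "is_sharp m n i N G Z0 \<longleftrightarrow> Z0 \<in> blk m n i \<and>
     (\<forall>Z\<in>blk m n i. inner_blk m n i G Z - N Z ^ 2 / 2 \<le> inner_blk m n i G Z0 - N Z0 ^ 2 / 2)"

definition upd :: "(bvec \<Rightarrow> bvec) \<Rightarrow> (nat \<Rightarrow> mat \<Rightarrow> mat) \<Rightarrow> (nat \<Rightarrow> nat set \<Rightarrow> real)
    \<Rightarrow> nat set \<Rightarrow> bvec \<Rightarrow> bvec" where
  "upd grad sharp L S X = (\<lambda>i. if i \<in> S then msub (X i) (mscale (1 / L i S) (sharp i (grad X i))) else X i)"

text \<open>Iterate after the sampled indices s_0,...,s_{k-1} (S^j = {s_j..b}).\<close>
definition iter :: "nat \<Rightarrow> (bvec \<Rightarrow> bvec) \<Rightarrow> (nat \<Rightarrow> mat \<Rightarrow> mat) \<Rightarrow> (nat \<Rightarrow> nat set \<Rightarrow> real)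
    \<Rightarrow> bvec \<Rightarrow> nat list \<Rightarrow> bvec" where
  "iter b grad sharp L X0 ss = foldl (\<lambda>X s. upd grad sharp L {s..b} X) X0 ss"

text \<open>Expectation of g(X^k): s_0,...,s_{k-1} i.i.d. with Pr(s=i) = p i.\<close>
definition expect_iter :: "nat \<Rightarrow> (nat \<Rightarrow> real) \<Rightarrow> (bvec \<Rightarrow> bvec) \<Rightarrow> (nat \<Rightarrow> mat \<Rightarrow> mat)
    \<Rightarrow> (nat \<Rightarrow> nat set \<Rightarrow> real) \<Rightarrow> bvec \<Rightarrow> nat \<Rightarrow> (bvec \<Rightarrow> real) \<Rightarrow> real" where
  "expect_iter b p grad sharp L X0 k g =
     (\<Sum>ss\<in>{ss. length ss = k \<and> set ss \<subseteq> {1..b}}.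
        (\<Prod>j<k. p (ss ! j)) * g (iter b grad sharp L X0 ss))"

end

theory Submission
  imports Defs
begin

lemma zmat_blk: "zmat \<in> blk m n i" by (simp add: blk_def zmat_def)
lemma mscale_blk: "Z \<in> blk m n i \<Longrightarrow> mscale a Z \<in> blk m n i" by (simp add: blk_def mscale_def)
lemma msub_blk: "Z \<in> blk m n i \<Longrightarrow> W \<in> blk m n i \<Longrightarrow> msub Z W \<in> blk m n i" by (simp add: blk_def msub_def)
lemma inner_zmat: "inner_blk m n i G zmat = 0" by (simp add: inner_blk_def zmat_def)
lemma inner_mscale: "inner_blk m n i G (mscale a Z) = a * inner_blk m n i G Z"
  by (simp add: inner_blk_def mscale_def sum_distrib_left algebra_simps)

lemma dual_bound:
  assumes nrm: "is_norm_on_blk m n i Nn" and sh: "is_sharp m n i Nn G Z0"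
  shows "(dual_norm m n i Nn G)^2 \<le> 2 * (inner_blk m n i G Z0 - Nn Z0 ^ 2 / 2)"
proof -
  define V where "V = inner_blk m n i G Z0 - Nn Z0 ^ 2 / 2"
  have N0: "Nn zmat = 0" using nrm zmat_blk unfolding is_norm_on_blk_def by blast
  have V0: "0 \<le> V" using sh zmat_blk[of m n i] N0 inner_zmat[of m n i G]
    unfolding is_sharp_def V_def by fastforce
  define A where "A = {inner_blk m n i G Z | Z. Z \<in> blk m n i \<and> Nn Z \<le> 1}"
  have bnd: "t \<le> sqrt (2*V)" if tA: "t \<in> A" for t
  proof -
    obtain Z where Z: "Z \<in> blk m n i" "Nn Z \<le> 1" "t = inner_blk m n i G Z" using tA unfolding A_def by blast
    show ?thesis
    proof (cases "t \<le> 0")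
      case True then show ?thesis using V0 by (meson order_trans real_sqrt_ge_zero mult_nonneg_nonneg zero_le_numeral)
    next
      case False
      have b1: "mscale t Z \<in> blk m n i" using Z mscale_blk by blast
      have "Nn (mscale t Z) = t * Nn Z" using nrm Z False unfolding is_norm_on_blk_def by simp
      moreover have "0 \<le> Nn Z" using nrm Z unfolding is_norm_on_blk_def by blast
      ultimately have "Nn (mscale t Z) \<le> t" "0 \<le> Nn (mscale t Z)" using Z False
        by (auto simp: mult_left_le)
      hence "Nn (mscale t Z)^2 \<le> t^2" by (simp add: power_mono)
      moreover have "inner_blk m n i G (mscale t Z) - Nn (mscale t Z)^2/2 \<le> V"
        using sh b1 unfolding is_sharp_def V_def by blast
      ultimately have "t^2 \<le> 2*V" using Z inner_mscale[of m n i G t Z] by (simp add: power2_eq_square)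
      thus ?thesis using real_le_rsqrt by blast
    qed
  qed
  have ne: "0 \<in> A" unfolding A_def using zmat_blk N0 inner_zmat by fastforce
  have ba: "bdd_above A" using bnd by (rule bdd_aboveI)
  have "Sup A \<le> sqrt (2*V)" using bnd ne by (intro cSup_least) auto
  moreover have "0 \<le> Sup A" using ne ba by (simp add: cSup_upper)
  ultimately have "(Sup A)^2 \<le> (sqrt (2*V))^2" by (simp add: power_mono)
  thus ?thesis using V0 unfolding dual_norm_def A_def V_def by simp
qed
theorem theorem1:
  fixes b :: nat and m n :: "nat \<Rightarrow> nat"
    and N :: "nat \<Rightarrow> mat \<Rightarrow> real"
    and f :: "bvec \<Rightarrow> real" and grad :: "bvec \<Rightarrow> bvec" and fstar :: real
    and p :: "nat \<Rightarrow> real" and L :: "nat \<Rightarrow> nat set \<Rightarrow> real"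
    and sharp :: "nat \<Rightarrow> mat \<Rightarrow> mat" and X0 :: bvec and K :: nat
  assumes b: "1 \<le> b"
    and norms: "\<forall>i\<in>{1..b}. is_norm_on_blk m n i (N i)"
    and diff: "cont_diff_grad b m n f grad"
    and lower: "\<forall>X\<in>bspace b m n. fstar \<le> f X"
    and p_nonneg: "\<forall>i\<in>{1..b}. 0 \<le> p i"
    and p_sum: "(\<Sum>i=1..b. p i) = 1"
    and p1: "0 < p 1"
    and L_nonneg: "\<forall>s\<in>{1..b}. 0 < p s \<longrightarrow> (\<forall>i\<in>{1..b}. 0 \<le> L i {s..b})"
    and L_zero: "\<forall>s\<in>{1..b}. 0 < p s \<longrightarrow> (\<forall>i\<in>{1..b}. i \<notin> {s..b} \<longrightarrow> L i {s..b} = 0)"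
    and L_pos: "\<forall>s\<in>{1..b}. 0 < p s \<longrightarrow> (\<forall>i\<in>{s..b}. 0 < L i {s..b})"
    and smooth: "\<forall>s\<in>{1..b}. 0 < p s \<longrightarrow>
       (\<forall>X\<in>bspace b m n. \<forall>\<Gamma>\<in>bspace b m n. (\<forall>i. i \<notin> {s..b} \<longrightarrow> \<Gamma> i = zmat) \<longrightarrow>
          f (badd X \<Gamma>) - f X - binner b m n (grad X) \<Gamma>
            \<le> (\<Sum>i\<in>{s..b}. L i {s..b} / 2 * N i (\<Gamma> i) ^ 2))"
    and sharp: "\<forall>i\<in>{1..b}. \<forall>G\<in>blk m n i. is_sharp m n i (N i) G (sharp i G)"
    and X0: "X0 \<in> bspace b m n"
    and K: "1 \<le> K"
  shows "(let w = (\<lambda>i. \<Sum>s=1..i. p s / (2 * L i {s..b}));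
              W = (1 / real b) * (\<Sum>j=1..b. w j)
          in (1 / real K) * (\<Sum>k<K. \<Sum>i=1..b. w i / W *
                expect_iter b p grad sharp L X0 k (\<lambda>X. (dual_norm m n i (N i) (grad X i))\<^sup>2))
             \<le> (f X0 - fstar) / (real K * W))"
  proof -
  define S where "S = (\<lambda>s::nat. {s..b})"
  define d where "d = (\<lambda>i X. (dual_norm m n i (N i) (grad X i))\<^sup>2)"
  define E where "E = (\<lambda>k g. expect_iter b p grad sharp L X0 k g)"
  define A where "A = (\<lambda>k. {ss::nat list. length ss = k \<and> set ss \<subseteq> {1..b}})"
  have gradB: "grad X \<in> bspace b m n" if "X \<in> bspace b m n" for X
    using diff that unfolding cont_diff_grad_def by blast
  have gradblk: "grad X i \<in> blk m n i" if "X \<in> bspace b m n" "i \<in> {1..b}" for X i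
    using gradB[OF that(1)] that(2) unfolding bspace_def by blast
  have shblk: "sharp i (grad X i) \<in> blk m n i" if "X \<in> bspace b m n" "i \<in> {1..b}" for X i
    using sharp gradblk[OF that] that(2) unfolding is_sharp_def by blast
  have updB: "upd grad sharp L {s..b} X \<in> bspace b m n" if "X \<in> bspace b m n" "1 \<le> s" for X s
    using that shblk unfolding bspace_def upd_def
    by (auto intro!: msub_blk mscale_blk)
  have iterB: "iter b grad sharp L X0 ss \<in> bspace b m n" if "set ss \<subseteq> {1..b}" for ss
    using that
  proof (induction ss rule: rev_induct)
    case Nil then show ?case using X0 by (simp add: iter_def)
  next
    case (snoc x xs)
    then show ?case using updB[of "iter b grad sharp L X0 xs" x] by (simp add: iter_def)
  qed
  have descent: "f (upd grad sharp L {s..b} X) \<le> f X - (\<Sum>i\<in>{s..b}. d i X / (2 * L i {s..b}))"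
    if XB: "X \<in> bspace b m n" and s: "s \<in> {1..b}" and ps: "0 < p s" for X s
  proof -
    define Ga where "Ga = (\<lambda>i. if i \<in> {s..b} then mscale (- (1 / L i {s..b})) (sharp i (grad X i)) else zmat)"
    have sub: "{s..b} \<subseteq> {1..b}" using s by auto
    have GaB: "Ga \<in> bspace b m n"
      unfolding bspace_def Ga_def using sub shblk[OF XB] zmat_blk by (auto intro!: mscale_blk)
    have GaZ: "\<forall>i. i \<notin> {s..b} \<longrightarrow> Ga i = zmat" unfolding Ga_def by simp
    have eq: "badd X Ga = upd grad sharp L {s..b} X"
      unfolding badd_def Ga_def upd_def madd_def msub_def mscale_def zmat_def by (rule ext) auto
    have inn: "binner b m n (grad X) Ga = (\<Sum>i\<in>{s..b}. - (1 / L i {s..b}) * inner_blk m n i (grad X i) (sharp i (grad X i)))"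
    proof -
      have "binner b m n (grad X) Ga = (\<Sum>i\<in>{1..b}. if i \<in> {s..b} then - (1 / L i {s..b}) * inner_blk m n i (grad X i) (sharp i (grad X i)) else 0)"
        unfolding binner_def Ga_def by (rule sum.cong) (auto simp: inner_mscale inner_zmat)
      also have "\<dots> = (\<Sum>i\<in>{1..b} \<inter> {s..b}. - (1 / L i {s..b}) * inner_blk m n i (grad X i) (sharp i (grad X i)))"
        by (rule sum.inter_restrict[symmetric]) simp
      also have "{1..b} \<inter> {s..b} = {s..b}" using sub by auto
      finally show ?thesis .
    qed
    have nrm: "N i (Ga i) = (1 / L i {s..b}) * N i (sharp i (grad X i))" if "i \<in> {s..b}" for i
    proof -
      have "L i {s..b} > 0" using L_pos s ps that by blast
      moreover have "is_norm_on_blk m n i (N i)" using norms sub that by blast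
      ultimately show ?thesis using shblk[OF XB] sub that unfolding Ga_def is_norm_on_blk_def by auto
    qed
    have sm: "f (badd X Ga) - f X - binner b m n (grad X) Ga \<le> (\<Sum>i\<in>{s..b}. L i {s..b} / 2 * N i (Ga i) ^ 2)"
      using smooth s ps XB GaB GaZ by blast
    have termb: "- (1 / L i {s..b}) * inner_blk m n i (grad X i) (sharp i (grad X i))
        + L i {s..b} / 2 * ((1 / L i {s..b}) * N i (sharp i (grad X i))) ^ 2 \<le> - (d i X / (2 * L i {s..b}))"
      if i: "i \<in> {s..b}" for i
    proof -
      have Lp: "L i {s..b} > 0" using L_pos s ps i by blast
      have db: "d i X \<le> 2 * (inner_blk m n i (grad X i) (sharp i (grad X i)) - N i (sharp i (grad X i)) ^ 2 / 2)"
        unfolding d_def using dual_bound[of m n i "N i" "grad X i" "sharp i (grad X i)"]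
          norms sharp gradblk[OF XB] sub i by blast
      define a where "a = inner_blk m n i (grad X i) (sharp i (grad X i))"
      define c where "c = N i (sharp i (grad X i))"
      define l where "l = L i {s..b}"
      have "- (1 / l) * a + l / 2 * ((1 / l) * c) ^ 2 = - ((a - c^2/2) / l)"
        using Lp unfolding l_def by (simp add: field_simps power2_eq_square)
      moreover have "d i X / (2 * l) \<le> (a - c^2/2) / l"
        using db Lp unfolding a_def c_def l_def by (simp add: field_simps)
      ultimately show ?thesis unfolding a_def c_def l_def by linarith
    qed
    have "f (badd X Ga) \<le> f X + (\<Sum>i\<in>{s..b}. - (1 / L i {s..b}) * inner_blk m n i (grad X i) (sharp i (grad X i))
        + L i {s..b} / 2 * ((1 / L i {s..b}) * N i (sharp i (grad X i))) ^ 2)"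
    proof -
      have e1: "(\<Sum>i\<in>{s..b}. L i {s..b} / 2 * N i (Ga i) ^ 2) = (\<Sum>i\<in>{s..b}. L i {s..b} / 2 * ((1 / L i {s..b}) * N i (sharp i (grad X i))) ^ 2)"
        using nrm by (intro sum.cong) auto
      show ?thesis using sm inn e1 sum.distrib[of "\<lambda>i. - (1 / L i {s..b}) * inner_blk m n i (grad X i) (sharp i (grad X i))" "\<lambda>i. L i {s..b} / 2 * ((1 / L i {s..b}) * N i (sharp i (grad X i))) ^ 2" "{s..b}"]
        by linarith
    qed
    also have "\<dots> \<le> f X + (\<Sum>i\<in>{s..b}. - (d i X / (2 * L i {s..b})))"
      using termb by (intro add_left_mono sum_mono) auto
    finally show ?thesis using eq by (simp add: sum_negf)
  qed
  have E0: "E 0 g = g X0" for g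
  proof -
    have "{ss::nat list. length ss = 0 \<and> set ss \<subseteq> {1..b}} = {[]}" by auto
    then show ?thesis unfolding E_def expect_iter_def by (simp add: iter_def)
  qed
  have Erec: "E (Suc k) g = E k (\<lambda>X. \<Sum>s=1..b. p s * g (upd grad sharp L {s..b} X))" for k g
  proof -
    have img: "A (Suc k) = (\<lambda>(ss, s). ss @ [s]) ` (A k \<times> {1..b})"
    proof
      show "A (Suc k) \<subseteq> (\<lambda>(ss, s). ss @ [s]) ` (A k \<times> {1..b})"
      proof
        fix xs assume xs: "xs \<in> A (Suc k)"
        then have ne: "xs \<noteq> []" unfolding A_def by auto
        then have "xs = butlast xs @ [last xs]" by simp
        moreover have "butlast xs \<in> A k" using xs ne unfolding A_def
          by (auto dest: in_set_butlastD)
        moreover have "last xs \<in> {1..b}" using xs ne last_in_set[OF ne] unfolding A_def by blast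
        ultimately show "xs \<in> (\<lambda>(ss, s). ss @ [s]) ` (A k \<times> {1..b})" by force
      qed
    next
      show "(\<lambda>(ss, s). ss @ [s]) ` (A k \<times> {1..b}) \<subseteq> A (Suc k)" unfolding A_def by auto
    qed
    have inj: "inj_on (\<lambda>(ss, s). ss @ [s]) (A k \<times> {1..b})"
      by (rule inj_onI) auto
    have "E (Suc k) g = (\<Sum>xs\<in>A (Suc k). (\<Prod>j<Suc k. p (xs ! j)) * g (iter b grad sharp L X0 xs))"
      unfolding E_def expect_iter_def A_def ..
    also have "\<dots> = (\<Sum>(ss, s)\<in>A k \<times> {1..b}. (\<Prod>j<Suc k. p ((ss @ [s]) ! j)) * g (iter b grad sharp L X0 (ss @ [s])))"
      unfolding img by (subst sum.reindex[OF inj]) (simp add: case_prod_beta)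
    also have "\<dots> = (\<Sum>ss\<in>A k. \<Sum>s\<in>{1..b}. (\<Prod>j<Suc k. p ((ss @ [s]) ! j)) * g (iter b grad sharp L X0 (ss @ [s])))"
      by (rule sum.cartesian_product[symmetric])
    also have "\<dots> = (\<Sum>ss\<in>A k. (\<Prod>j<k. p (ss ! j)) * (\<Sum>s=1..b. p s * g (upd grad sharp L {s..b} (iter b grad sharp L X0 ss))))"
    proof (rule sum.cong[OF refl])
      fix ss assume "ss \<in> A k"
      then have len: "length ss = k" unfolding A_def by auto
      have pr: "(\<Prod>j<Suc k. p ((ss @ [s]) ! j)) = (\<Prod>j<k. p (ss ! j)) * p s" for s
        using len by (simp add: prod.lessThan_Suc nth_append)
      show "(\<Sum>s\<in>{1..b}. (\<Prod>j<Suc k. p ((ss @ [s]) ! j)) * g (iter b grad sharp L X0 (ss @ [s]))) =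
        (\<Prod>j<k. p (ss ! j)) * (\<Sum>s=1..b. p s * g (upd grad sharp L {s..b} (iter b grad sharp L X0 ss)))"
        unfolding pr by (simp add: iter_def sum_distrib_left mult.assoc)
    qed
    also have "\<dots> = E k (\<lambda>X. \<Sum>s=1..b. p s * g (upd grad sharp L {s..b} X))"
      unfolding E_def expect_iter_def A_def ..
    finally show ?thesis .
  qed
  have wnn: "0 \<le> (\<Prod>j<k. p (ss ! j))" if "ss \<in> A k" for ss k
    using that p_nonneg unfolding A_def by (auto intro!: prod_nonneg dest!: nth_mem simp: subset_iff)
  have Emono: "E k g \<le> E k h" if "\<And>ss. ss \<in> A k \<Longrightarrow> g (iter b grad sharp L X0 ss) \<le> h (iter b grad sharp L X0 ss)" for k g h
  proof -
    have "E k g = (\<Sum>ss\<in>A k. (\<Prod>j<k. p (ss ! j)) * g (iter b grad sharp L X0 ss))"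
      unfolding E_def expect_iter_def A_def ..
    also have "\<dots> \<le> (\<Sum>ss\<in>A k. (\<Prod>j<k. p (ss ! j)) * h (iter b grad sharp L X0 ss))"
      by (intro sum_mono mult_left_mono that wnn)
    also have "\<dots> = E k h" unfolding E_def expect_iter_def A_def ..
    finally show ?thesis .
  qed
  have Econst: "E k (\<lambda>X. c) = c" for k c
  proof (induction k)
    case 0 then show ?case by (simp add: E0)
  next
    case (Suc k)
    have "(\<Sum>s=1..b. p s * c) = c" using p_sum by (simp add: sum_distrib_right[symmetric])
    then show ?case using Suc by (simp add: Erec)
  qed
  have Ediff: "E k (\<lambda>X. g X - h X) = E k g - E k h" for k g h
    unfolding E_def expect_iter_def by (simp add: right_diff_distrib sum_subtractf)
  have Elin: "E k (\<lambda>X. \<Sum>i=1..b. c i * g i X) = (\<Sum>i=1..b. c i * E k (g i))" for k c g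
    unfolding E_def expect_iter_def
    by (simp add: sum_distrib_left sum_distrib_right mult_ac) (rule sum.swap)
  define w where "w = (\<lambda>i. \<Sum>s=1..i. p s / (2 * L i {s..b}))"
  define D where "D = (\<lambda>k. \<Sum>i=1..b. w i * E k (d i))"
  have pw: "(\<Sum>s=1..b. p s * f (upd grad sharp L {s..b} X)) \<le> f X - (\<Sum>i=1..b. w i * d i X)"
    if XB: "X \<in> bspace b m n" for X
  proof -
    have "(\<Sum>s=1..b. p s * f (upd grad sharp L {s..b} X)) \<le> (\<Sum>s=1..b. p s * (f X - (\<Sum>i\<in>{s..b}. d i X / (2 * L i {s..b}))))"
    proof (rule sum_mono)
      fix s assume s: "s \<in> {1..b}"
      show "p s * f (upd grad sharp L {s..b} X) \<le> p s * (f X - (\<Sum>i\<in>{s..b}. d i X / (2 * L i {s..b})))"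
      proof (cases "p s = 0")
        case False
        then have "0 < p s" using p_nonneg s by force
        then show ?thesis using descent[OF XB s] by (intro mult_left_mono) auto
      qed simp
    qed
    also have "\<dots> = f X - (\<Sum>s=1..b. \<Sum>i\<in>{s..b}. p s * d i X / (2 * L i {s..b}))"
    proof -
      have "(\<Sum>s=1..b. f X * p s) = f X" using p_sum by (simp add: sum_distrib_left[symmetric])
      then show ?thesis by (simp add: right_diff_distrib sum_subtractf sum_distrib_left mult_ac)
    qed
    also have "(\<Sum>s=1..b. \<Sum>i\<in>{s..b}. p s * d i X / (2 * L i {s..b})) = (\<Sum>i=1..b. w i * d i X)"
    proof -
      have "(\<Sum>s=1..b. \<Sum>i\<in>{s..b}. p s * d i X / (2 * L i {s..b}))
          = (\<Sum>s=1..b. \<Sum>i=1..b. if s \<le> i then p s * d i X / (2 * L i {s..b}) else 0)"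
      proof (rule sum.cong[OF refl])
        fix s assume s: "s \<in> {1..b}"
        have "{1..b} \<inter> {s..b} = {s..b}" using s by auto
        then have "(\<Sum>i\<in>{s..b}. p s * d i X / (2 * L i {s..b})) = (\<Sum>i\<in>{1..b}. if i \<in> {s..b} then p s * d i X / (2 * L i {s..b}) else 0)"
          using sum.inter_restrict[of "{1..b}" "\<lambda>i. p s * d i X / (2 * L i {s..b})" "{s..b}"] by (metis finite_atLeastAtMost)
        also have "\<dots> = (\<Sum>i=1..b. if s \<le> i then p s * d i X / (2 * L i {s..b}) else 0)"
          by (rule sum.cong) auto
        finally show "(\<Sum>i\<in>{s..b}. p s * d i X / (2 * L i {s..b})) = (\<Sum>i=1..b. if s \<le> i then p s * d i X / (2 * L i {s..b}) else 0)" .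
      qed
      also have "\<dots> = (\<Sum>i=1..b. \<Sum>s=1..b. if s \<le> i then p s * d i X / (2 * L i {s..b}) else 0)"
        by (rule sum.swap)
      also have "\<dots> = (\<Sum>i=1..b. w i * d i X)"
      proof (rule sum.cong[OF refl])
        fix i assume i: "i \<in> {1..b}"
        have "{1..b} \<inter> {..i} = {1..i}" using i by auto
        then have "(\<Sum>s\<in>{1..i}. p s * d i X / (2 * L i {s..b})) = (\<Sum>s\<in>{1..b}. if s \<in> {..i} then p s * d i X / (2 * L i {s..b}) else 0)"
          using sum.inter_restrict[of "{1..b}" "\<lambda>s. p s * d i X / (2 * L i {s..b})" "{..i}"] by (metis finite_atLeastAtMost)
        then show "(\<Sum>s=1..b. if s \<le> i then p s * d i X / (2 * L i {s..b}) else 0) = w i * d i X"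
          unfolding w_def by (simp add: sum_distrib_right)
      qed
      finally show ?thesis .
    qed
    finally show ?thesis .
  qed
  have step: "E (Suc k) f \<le> E k f - D k" for k
  proof -
    have "E (Suc k) f \<le> E k (\<lambda>X. f X - (\<Sum>i=1..b. w i * d i X))"
      unfolding Erec by (rule Emono, rule pw, rule iterB) (auto simp: A_def)
    also have "\<dots> = E k f - D k" unfolding Ediff D_def Elin by simp
    finally show ?thesis .
  qed
  have tele: "(\<Sum>k<K'. D k) \<le> E 0 f - E K' f" for K'
  proof (induction K')
    case (Suc K') then show ?case using step[of K'] by simp
  qed simp
  have EKf: "fstar \<le> E K f"
  proof -
    have "E K (\<lambda>X. fstar) \<le> E K f"
      by (rule Emono) (use lower iterB in \<open>auto simp: A_def\<close>)
    then show ?thesis by (simp add: Econst)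
  qed
  have sumD: "(\<Sum>k<K. D k) \<le> f X0 - fstar" using tele[of K] EKf E0[of f] by simp
  have wnn': "0 \<le> w i" if "i \<in> {1..b}" for i
    unfolding w_def
  proof (rule sum_nonneg)
    fix s assume s: "s \<in> {1..i}"
    show "0 \<le> p s / (2 * L i {s..b})"
    proof (cases "p s = 0")
      case False
      then have "0 < p s" using p_nonneg s that by force
      then have "0 \<le> L i {s..b}" using L_nonneg s that by auto
      then show ?thesis using p_nonneg s that by simp
    qed simp
  qed
  have w1: "0 < w 1"
  proof -
    have "0 < L 1 {1..b}" using L_pos p1 b by auto
    then show ?thesis unfolding w_def using p1 by simp
  qed
  have sw: "0 < (\<Sum>j=1..b. w j)"
  proof -
    have "(\<Sum>j=1..b. w j) = w 1 + (\<Sum>j\<in>{1..b}-{1}. w j)"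
      using b by (subst sum.remove[of "{1..b}" 1]) auto
    moreover have "0 \<le> (\<Sum>j\<in>{1..b}-{1}. w j)" using wnn' by (intro sum_nonneg) auto
    ultimately show ?thesis using w1 by linarith
  qed
  define W where "W = (1 / real b) * (\<Sum>j=1..b. w j)"
  have Wp: "0 < W" unfolding W_def using sw b by simp
  have Kp: "0 < real K" using K by simp
  have lhs: "(1 / real K) * (\<Sum>k<K. \<Sum>i=1..b. w i / W * E k (d i)) = (\<Sum>k<K. D k) / (real K * W)"
    unfolding D_def by (simp add: sum_divide_distrib field_simps)
  have "(\<Sum>k<K. D k) / (real K * W) \<le> (f X0 - fstar) / (real K * W)"
    using sumD Wp Kp by (intro divide_right_mono) auto
  then show ?thesis
    using lhs unfolding Let_def w_def[symmetric] W_def[symmetric] E_def d_def by simp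
qed

end
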